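(* Let $n>1$, let $\mathbf{A}\in\mathbb{R}^{n\times n}$ be symmetric with $\mathbf{I}-\mathbf{A}$ invertible, $\mathbf{b}\in\mathbb{R}^n$, $\mathcal{FP}(\mathbf{x})=\mathbf{A}\mathbf{x}+\mathbf{b}$, and $\mathbf{x}^\star$ the unique fixed point of $\mathcal{FP}$. Let $\mathbf{v}_1,\mathbf{v}_2$ be two orthogonal eigenvectors of $\mathbf{A}$ with eigenvalues $\lambda_1,\lambda_2\ne0$, and let $\mathbf{x}^0$ satisfy $\mathbf{x}^0-\mathbf{x}^\star\in\mathrm{span}\{\mathbf{v}_1,\mathbf{v}_2\}$. Let $\{\mathbf{x}^i\}$ be the sequence generated by AA$^\star$(1) applied to $\mathcal{FP}$ from $\mathbf{x}^0$, and $\mathbf{e}^i=\mathbf{x}^i-\mathbf{x}^\star$. Then $$\|\mathbf{e}^{i+4}\|\le r(\lambda_1,\lambda_2)\|\mathbf{e}^i\|\quad\text{for } i=0,4,8,12,\dots,\qquad r(\lambda_1,\lambda_2)=\frac{\lambda_1^2\lambda_2^2(\lambda_2-\lambda_1)^2}{\big(|\lambda_1(\lambda_1-1)|+|\lambda_2(\lambda_2-1)|\big)^2}.$$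
   Context: Let $\Delta\mathcal{FP}(\mathbf{x})=\mathcal{FP}(\mathbf{x})-\mathbf{x}$ and $\|\cdot\|$ the Euclidean norm. The restarted Anderson acceleration AA$^\star$(1) is the iteration: for $i=0,2,4,\dots$, set $\mathbf{x}^{i+1}=\mathcal{FP}(\mathbf{x}^i)$; choose $\alpha^{(i+1)}\in\mathbb{R}$ minimizing $\|\Delta\mathcal{FP}(\mathbf{x}^{i+1})+\alpha^{(i+1)}(\Delta\mathcal{FP}(\mathbf{x}^i)-\Delta\mathcal{FP}(\mathbf{x}^{i+1}))\|$; set $\mathbf{x}^{i+2}=\mathcal{FP}(\mathbf{x}^{i+1})+\alpha^{(i+1)}(\mathcal{FP}(\mathbf{x}^i)-\mathcal{FP}(\mathbf{x}^{i+1}))$. *)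

theory Defs
  imports "HOL-Analysis.Analysis"
begin

definition DeltaFP :: "('a::real_normed_vector \<Rightarrow> 'a) \<Rightarrow> 'a \<Rightarrow> 'a" where
  "DeltaFP FP x = FP x - x"

definition AA_star1_seq ::
  "('a::real_normed_vector \<Rightarrow> 'a) \<Rightarrow> (nat \<Rightarrow> 'a) \<Rightarrow> (nat \<Rightarrow> real) \<Rightarrow> bool" where
  "AA_star1_seq FP x alpha \<longleftrightarrow>
     (\<forall>i. even i \<longrightarrow>
        x (i + 1) = FP (x i) \<and>
        (\<forall>\<beta>::real. norm (DeltaFP FP (x (i + 1)) + alpha (i + 1) *\<^sub>R (DeltaFP FP (x i) - DeltaFP FP (x (i + 1))))
                  \<le> norm (DeltaFP FP (x (i + 1)) + \<beta> *\<^sub>R (DeltaFP FP (x i) - DeltaFP FP (x (i + 1))))) \<and>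
        x (i + 2) = FP (x (i + 1)) + alpha (i + 1) *\<^sub>R (FP (x i) - FP (x (i + 1))))"

definition rate :: "real \<Rightarrow> real \<Rightarrow> real" where
  "rate l1 l2 = (l1^2 * l2^2 * (l2 - l1)^2) / (\<bar>l1 * (l1 - 1)\<bar> + \<bar>l2 * (l2 - 1)\<bar>)^2"

end

theory Submission
  imports Defs
begin

definition Qf :: "real \<Rightarrow> real \<Rightarrow> real \<Rightarrow> real \<Rightarrow> real \<Rightarrow> real \<Rightarrow> real" where
  "Qf l1 l2 n1 n2 a c = a^2*(l1-1)^4*n1 + c^2*(l2-1)^4*n2"
definition alf :: "real \<Rightarrow> real \<Rightarrow> real \<Rightarrow> real \<Rightarrow> real \<Rightarrow> real \<Rightarrow> real" where
  "alf l1 l2 n1 n2 a c = (a^2*l1*(l1-1)^3*n1 + c^2*l2*(l2-1)^3*n2) / Qf l1 l2 n1 n2 a c"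
definition sa :: "real \<Rightarrow> real \<Rightarrow> real \<Rightarrow> real \<Rightarrow> real \<Rightarrow> real \<Rightarrow> real" where
  "sa l1 l2 n1 n2 a c = a*l1*(l1 - alf l1 l2 n1 n2 a c * (l1-1))"
definition sc :: "real \<Rightarrow> real \<Rightarrow> real \<Rightarrow> real \<Rightarrow> real \<Rightarrow> real \<Rightarrow> real" where
  "sc l1 l2 n1 n2 a c = c*l2*(l2 - alf l1 l2 n1 n2 a c * (l2-1))"

lemma Qf_zero:
  assumes "n1 > 0" "n2 > 0" "l1 \<noteq> 1" "l2 \<noteq> 1" "Qf l1 l2 n1 n2 a c = 0"
  shows "a = 0 \<and> c = 0"
proof -
  have h1: "a^2*(l1-1)^4*n1 \<ge> 0" "c^2*(l2-1)^4*n2 \<ge> 0" using assms by simp_all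
  then have "a^2*(l1-1)^4*n1 = 0" "c^2*(l2-1)^4*n2 = 0" using assms(5) unfolding Qf_def by linarith+
  then show ?thesis using assms by simp
qed

lemma Qf_pos:
  assumes "n1 > 0" "n2 > 0" "l1 \<noteq> 1" "l2 \<noteq> 1" "Qf l1 l2 n1 n2 a c \<noteq> 0"
  shows "Qf l1 l2 n1 n2 a c > 0"
proof -
  have h1: "a^2*(l1-1)^4*n1 \<ge> 0" "c^2*(l2-1)^4*n2 \<ge> 0" using assms by simp_all
  then show ?thesis using assms(5) unfolding Qf_def by linarith
qed

lemma sa_eq:
  assumes "n1 > 0" "n2 > 0" "l1 \<noteq> 1" "l2 \<noteq> 1"
  shows "sa l1 l2 n1 n2 a c = (l2-l1)*a*c/Qf l1 l2 n1 n2 a c * c * (n2*l1*(l2-1)^3)"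
    and "sc l1 l2 n1 n2 a c = (l2-l1)*a*c/Qf l1 l2 n1 n2 a c * a * (-(n1*l2*(l1-1)^3))"
proof -
  have "sa l1 l2 n1 n2 a c = (l2-l1)*a*c/Qf l1 l2 n1 n2 a c * c * (n2*l1*(l2-1)^3) \<and>
     sc l1 l2 n1 n2 a c = (l2-l1)*a*c/Qf l1 l2 n1 n2 a c * a * (-(n1*l2*(l1-1)^3))"
  proof (cases "Qf l1 l2 n1 n2 a c = 0")
    case True
    then show ?thesis using Qf_zero[OF assms True] by (simp add: sa_def sc_def)
  next
    case False
    then show ?thesis unfolding sa_def sc_def alf_def
      by (simp add: field_simps Qf_def) (simp add: algebra_simps power_def)
  qed
  then show "sa l1 l2 n1 n2 a c = (l2-l1)*a*c/Qf l1 l2 n1 n2 a c * c * (n2*l1*(l2-1)^3)"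
    and "sc l1 l2 n1 n2 a c = (l2-l1)*a*c/Qf l1 l2 n1 n2 a c * a * (-(n1*l2*(l1-1)^3))" by auto
qed


lemma key_ineq:
  fixes X Y b1 b2 l1 l2 :: real
  assumes "X \<ge> 0" "Y \<ge> 0"
  shows "X*Y*(\<bar>l1*b1\<bar>+\<bar>l2*b2\<bar>)^2 \<le> (X*b1^2+Y*b2^2)*(X*l2^2+Y*l1^2)"
proof -
  have "(X*b1^2+Y*b2^2)*(X*l2^2+Y*l1^2) - X*Y*(\<bar>l1*b1\<bar>+\<bar>l2*b2\<bar>)^2
     = (X*\<bar>b1\<bar>*\<bar>l2\<bar> - Y*\<bar>b2\<bar>*\<bar>l1\<bar>)^2"
  proof -
    have e: "b1^2 = \<bar>b1\<bar>^2" "b2^2 = \<bar>b2\<bar>^2" "l1^2 = \<bar>l1\<bar>^2" "l2^2 = \<bar>l2\<bar>^2" by simp_all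
    show ?thesis unfolding e abs_mult by algebra
  qed
  moreover have "(X*\<bar>b1\<bar>*\<bar>l2\<bar> - Y*\<bar>b2\<bar>*\<bar>l1\<bar>)^2 \<ge> 0" by simp
  ultimately show ?thesis by linarith
qed

lemma two_step:
  assumes "n1 > 0" "n2 > 0" "l1 \<noteq> 1" "l2 \<noteq> 1" "l1 \<noteq> 0" "l2 \<noteq> 0"
  shows "\<exists>M. sa l1 l2 n1 n2 (sa l1 l2 n1 n2 a c) (sc l1 l2 n1 n2 a c) = M * a
            \<and> sc l1 l2 n1 n2 (sa l1 l2 n1 n2 a c) (sc l1 l2 n1 n2 a c) = M * c
            \<and> \<bar>M\<bar> \<le> rate l1 l2"
proof -
  define P where "P = n2*l1*(l2-1)^3"
  define R where "R = -(n1*l2*(l1-1)^3)"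
  define Q where "Q = Qf l1 l2 n1 n2 a c"
  define k where "k = (l2-l1)*a*c/Q"
  define a' where "a' = sa l1 l2 n1 n2 a c"
  define c' where "c' = sc l1 l2 n1 n2 a c"
  define Q' where "Q' = Qf l1 l2 n1 n2 a' c'"
  define k' where "k' = (l2-l1)*a'*c'/Q'"
  have a'eq: "a' = k*c*P" unfolding a'_def k_def Q_def P_def using sa_eq[OF assms(1-4)] by simp
  have c'eq: "c' = k*a*R" unfolding c'_def k_def Q_def R_def using sa_eq[OF assms(1-4)] by simp
  have a''eq: "sa l1 l2 n1 n2 a' c' = k'*c'*P" unfolding k'_def Q'_def P_def using sa_eq[OF assms(1-4)] by simp
  have c''eq: "sc l1 l2 n1 n2 a' c' = k'*a'*R" unfolding k'_def Q'_def R_def using sa_eq[OF assms(1-4)] by simp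
  define M where "M = k*k'*P*R"
  have rpos: "rate l1 l2 \<ge> 0" unfolding rate_def by simp
  have bound: "\<bar>M\<bar> \<le> rate l1 l2"
  proof (cases "k = 0")
    case True
    then show ?thesis using rpos by (simp add: M_def)
  next
    case False
    then have kQ: "Q \<noteq> 0" "a \<noteq> 0" "c \<noteq> 0" "l1 \<noteq> l2" unfolding k_def by auto
    have Qpos: "Q > 0" using Qf_pos[OF assms(1-4)] kQ(1) Q_def by simp
    define T where "T = c^2*P^2*(l1-1)^4*n1 + a^2*R^2*(l2-1)^4*n2"
    have Q'eq: "Q' = k^2 * T" unfolding Q'_def Qf_def T_def a'eq c'eq by (simp add: algebra_simps power2_eq_square)
    define X where "X = a^2*n1*(l1-1)^2"
    define Y where "Y = c^2*n2*(l2-1)^2"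
    define S where "S = X*l2^2 + Y*l1^2"
    have QXY: "Q = X*(l1-1)^2 + Y*(l2-1)^2" unfolding Q_def Qf_def X_def Y_def by (simp add: algebra_simps power_def)
    have TS: "T = n1*n2*(l1-1)^4*(l2-1)^4*S" unfolding T_def S_def X_def Y_def P_def R_def
      by (simp add: algebra_simps power_def)
    have Xp: "X > 0" unfolding X_def using kQ assms by simp
    have Yp: "Y > 0" unfolding Y_def using kQ assms by simp
    have Sp: "S > 0" unfolding S_def using Xp Yp assms by (simp add: add_pos_pos)
    have Tp: "T > 0" unfolding TS using Sp assms by simp
    define W where "W = n1*n2*(l1-1)^4*(l2-1)^4"
    have Wp: "W > 0" unfolding W_def using assms by simp
    have k'eq: "k' = (l2-l1)*a*c*P*R/T"
      unfolding k'_def Q'eq a'eq c'eq using False Tp by (simp add: field_simps power2_eq_square)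
    have M2: "M = (l2-l1)^2*(a^2*c^2*P^2*R^2)/(Q*T)"
      unfolding M_def k'eq k_def using Tp Qpos by (simp add: field_simps power2_eq_square)
    have PR: "a^2*c^2*P^2*R^2 = X*Y*l1^2*l2^2*W"
      unfolding X_def Y_def P_def R_def W_def by algebra
    have TW: "T = W*S" unfolding TS W_def by simp
    have Meq: "M = (l2-l1)^2*l1^2*l2^2 * (X*Y/(Q*S))"
      unfolding M2 PR TW using Wp Qpos Sp by (simp add: field_simps)
    define D where "D = \<bar>l1*(l1-1)\<bar>+\<bar>l2*(l2-1)\<bar>"
    have Dp: "D > 0" unfolding D_def using assms by (simp add: add_pos_pos)
    have ki: "X*Y*D^2 \<le> Q*S" unfolding QXY S_def D_def
      using key_ineq[of X Y l1 "l1-1" l2 "l2-1"] Xp Yp by simp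
    have "X*Y/(Q*S) \<le> 1/D^2" using ki Dp Qpos Sp by (simp add: field_simps)
    moreover have "M \<ge> 0" unfolding Meq using Xp Yp Qpos Sp by simp
    ultimately have "M \<le> (l2-l1)^2*l1^2*l2^2 * (1/D^2)" unfolding Meq
      by (intro mult_left_mono) auto
    then show ?thesis using \<open>M \<ge> 0\<close> unfolding rate_def D_def by (simp add: field_simps)
  qed
  show ?thesis
    apply (rule exI[of _ M])
    using a''eq c''eq bound unfolding a'_def[symmetric] c'_def[symmetric] M_def a'eq c'eq
    by (simp add: algebra_simps)
qed


lemma normsq2:
  fixes v1 v2 :: "'a::real_inner"
  assumes "v1 \<bullet> v2 = 0"
  shows "(norm (p *\<^sub>R v1 + q *\<^sub>R v2))^2 = p^2*(v1 \<bullet> v1) + q^2*(v2 \<bullet> v2)"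
  unfolding power2_norm_eq_inner using assms
  by (simp add: inner_add_left inner_add_right inner_commute algebra_simps power2_eq_square)

lemma quad_min:
  fixes Q N K al :: real
  assumes "Q > 0" "\<And>\<beta>. Q*al^2 - 2*N*al + K \<le> Q*\<beta>^2 - 2*N*\<beta> + K"
  shows "al = N/Q"
proof -
  have "Q*al^2 - 2*N*al + K - (Q*(N/Q)^2 - 2*N*(N/Q) + K) = Q*(al - N/Q)^2"
    using assms(1) by (simp add: field_simps power2_eq_square)
  moreover have "Q*al^2 - 2*N*al + K \<le> Q*(N/Q)^2 - 2*N*(N/Q) + K" by (rule assms(2))
  ultimately have "Q*(al - N/Q)^2 \<le> 0" by linarith
  then have "(al - N/Q)^2 \<le> 0" using assms(1) by (simp add: mult_le_0_iff)
  then show ?thesis by simp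
qed

lemma aa_step:
  fixes A :: "real^'n^'n" and b xstar v1 v2 :: "real^'n"
    and l1 l2 :: real and x :: "nat \<Rightarrow> real^'n" and alpha :: "nat \<Rightarrow> real"
  assumes "A *v xstar + b = xstar"
    and "v1 \<noteq> 0" and "v2 \<noteq> 0" and "v1 \<bullet> v2 = 0"
    and "A *v v1 = l1 *\<^sub>R v1" and "A *v v2 = l2 *\<^sub>R v2"
    and "l1 \<noteq> 1" and "l2 \<noteq> 1"
    and "AA_star1_seq (\<lambda>y. A *v y + b) x alpha"
    and "even (i::nat)" and ei: "x i - xstar = a *\<^sub>R v1 + c *\<^sub>R v2"
  shows "x (i+2) - xstar = sa l1 l2 (v1 \<bullet> v1) (v2 \<bullet> v2) a c *\<^sub>R v1 + sc l1 l2 (v1 \<bullet> v1) (v2 \<bullet> v2) a c *\<^sub>R v2"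
proof -
  define FP where "FP = (\<lambda>y. A *v y + b)"
  define n1 where "n1 = v1 \<bullet> v1"
  define n2 where "n2 = v2 \<bullet> v2"
  have n1p: "n1 > 0" unfolding n1_def using assms(2) by simp
  have n2p: "n2 > 0" unfolding n2_def using assms(3) by simp
  have hFP: "FP y - xstar = A *v (y - xstar)" for y
  proof -
    have "A *v (y - xstar) = A *v y - A *v xstar" by (simp add: matrix_vector_mult_diff_distrib)
    also have "A *v xstar = xstar - b" using assms(1) by (simp add: algebra_simps)
    finally show ?thesis unfolding FP_def by simp
  qed
  have Ae: "A *v (p *\<^sub>R v1 + q *\<^sub>R v2) = (p*l1) *\<^sub>R v1 + (q*l2) *\<^sub>R v2" for p q
    using assms(5,6) by (simp add: matrix_vector_right_distrib matrix_vector_mult_scaleR)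
  have H: "x (i + 1) = FP (x i) \<and>
        (\<forall>\<beta>::real. norm (DeltaFP FP (x (i + 1)) + alpha (i + 1) *\<^sub>R (DeltaFP FP (x i) - DeltaFP FP (x (i + 1))))
                  \<le> norm (DeltaFP FP (x (i + 1)) + \<beta> *\<^sub>R (DeltaFP FP (x i) - DeltaFP FP (x (i + 1))))) \<and>
        x (i + 2) = FP (x (i + 1)) + alpha (i + 1) *\<^sub>R (FP (x i) - FP (x (i + 1)))"
    using assms(9,10) unfolding AA_star1_seq_def FP_def[symmetric] by blast
  have seq: "x (i + 1) = FP (x i)"
    "\<And>\<beta>. norm (DeltaFP FP (x (i + 1)) + alpha (i + 1) *\<^sub>R (DeltaFP FP (x i) - DeltaFP FP (x (i + 1))))
                  \<le> norm (DeltaFP FP (x (i + 1)) + \<beta> *\<^sub>R (DeltaFP FP (x i) - DeltaFP FP (x (i + 1))))"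
    "x (i + 2) = FP (x (i + 1)) + alpha (i + 1) *\<^sub>R (FP (x i) - FP (x (i + 1)))"
    using H by blast+
  have e1: "x (i+1) - xstar = (a*l1) *\<^sub>R v1 + (c*l2) *\<^sub>R v2"
    using seq(1) hFP ei Ae by simp
  have DFP: "DeltaFP FP y = A *v (y - xstar) - (y - xstar)" for y
    unfolding DeltaFP_def using hFP[of y] by (simp add: algebra_simps)
  have D0: "DeltaFP FP (x i) = (a*(l1-1)) *\<^sub>R v1 + (c*(l2-1)) *\<^sub>R v2"
    unfolding DFP ei Ae by (simp add: algebra_simps)
  have D1: "DeltaFP FP (x (i+1)) = (a*l1*(l1-1)) *\<^sub>R v1 + (c*l2*(l2-1)) *\<^sub>R v2"
    unfolding DFP e1 Ae by (simp add: algebra_simps)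
  define g where "g = (\<lambda>\<beta>::real. (a*(l1-1)*(l1 - \<beta>*(l1-1)))^2*n1 + (c*(l2-1)*(l2 - \<beta>*(l2-1)))^2*n2)"
  have res: "(norm (DeltaFP FP (x (i + 1)) + \<beta> *\<^sub>R (DeltaFP FP (x i) - DeltaFP FP (x (i + 1)))))^2 = g \<beta>" for \<beta>
  proof -
    have "DeltaFP FP (x (i + 1)) + \<beta> *\<^sub>R (DeltaFP FP (x i) - DeltaFP FP (x (i + 1)))
       = (a*(l1-1)*(l1 - \<beta>*(l1-1))) *\<^sub>R v1 + (c*(l2-1)*(l2 - \<beta>*(l2-1))) *\<^sub>R v2"
    proof -
      have e1: "a * (l1 - 1) * (l1 - \<beta> * (l1 - 1)) = a * l1 * (l1 - 1) + \<beta> * (a * (l1 - 1)) - \<beta> * (a * l1 * (l1 - 1))" by algebra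
      have e2: "c * (l2 - 1) * (l2 - \<beta> * (l2 - 1)) = c * l2 * (l2 - 1) + \<beta> * (c * (l2 - 1)) - \<beta> * (c * l2 * (l2 - 1))" by algebra
      show ?thesis unfolding D0 D1 e1 e2 scaleR_add_left scaleR_diff_left by (simp add: algebra_simps)
    qed
    then show ?thesis unfolding g_def n1_def n2_def using normsq2[OF assms(4)] by simp
  qed
  have gmin: "g (alpha (i+1)) \<le> g \<beta>" for \<beta>
    unfolding res[symmetric] by (rule power_mono[OF seq(2)]) simp
  define Q where "Q = Qf l1 l2 n1 n2 a c"
  define N where "N = a^2*l1*(l1-1)^3*n1 + c^2*l2*(l2-1)^3*n2"
  define K where "K = a^2*(l1-1)^2*l1^2*n1 + c^2*(l2-1)^2*l2^2*n2"
  have gq: "g \<beta> = Q*\<beta>^2 - 2*N*\<beta> + K" for \<beta>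
    unfolding g_def Q_def N_def K_def Qf_def by algebra
  have e2: "x (i+2) - xstar = (a*l1*(l1 - alpha (i+1)*(l1-1))) *\<^sub>R v1 + (c*l2*(l2 - alpha (i+1)*(l2-1))) *\<^sub>R v2"
  proof -
    have "x (i+2) - xstar = (FP (x (i + 1)) - xstar) + alpha (i + 1) *\<^sub>R ((FP (x i) - xstar) - (FP (x (i + 1)) - xstar))"
      using seq(3) by (simp add: algebra_simps)
    also have "\<dots> = A *v (x (i+1) - xstar) + alpha (i + 1) *\<^sub>R (A *v (x i - xstar) - A *v (x (i+1) - xstar))"
      unfolding hFP by simp
    finally have X: "x (i+2) - xstar = A *v (x (i+1) - xstar) + alpha (i + 1) *\<^sub>R (A *v (x i - xstar) - A *v (x (i+1) - xstar))" .
    have i1: "a*l1*(l1 - alpha (i+1)*(l1-1)) = a*l1*l1 + alpha (i+1)*(a*l1) - alpha (i+1)*(a*l1*l1)" by algebra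
    have i2: "c*l2*(l2 - alpha (i+1)*(l2-1)) = c*l2*l2 + alpha (i+1)*(c*l2) - alpha (i+1)*(c*l2*l2)" by algebra
    show ?thesis unfolding X e1 ei Ae i1 i2 scaleR_add_left scaleR_diff_left by (simp add: algebra_simps)
  qed
  show ?thesis
  proof (cases "Q = 0")
    case True
    then have "a = 0 \<and> c = 0" using Qf_zero[OF n1p n2p assms(7,8)] unfolding Q_def by blast
    then show ?thesis unfolding e2 sa_def sc_def by simp
  next
    case False
    then have Qp: "Q > 0" using Qf_pos[OF n1p n2p assms(7,8)] unfolding Q_def by blast
    have gm: "Q*(alpha (i+1))^2 - 2*N*(alpha (i+1)) + K \<le> Q*\<beta>^2 - 2*N*\<beta> + K" for \<beta>
      using gmin[of \<beta>] unfolding gq .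
    have "alpha (i+1) = N/Q" by (rule quad_min[OF Qp gm])
    then have "alpha (i+1) = alf l1 l2 n1 n2 a c" unfolding alf_def N_def Q_def .
    then show ?thesis unfolding e2 sa_def sc_def n1_def n2_def by simp
  qed
qed


theorem lemma3:
  fixes A :: "real^'n^'n" and b xstar v1 v2 :: "real^'n"
    and l1 l2 :: real and x :: "nat \<Rightarrow> real^'n" and alpha :: "nat \<Rightarrow> real"
  assumes "CARD('n) > 1"
    and "transpose A = A"
    and "invertible (mat 1 - A)"
    and "A *v xstar + b = xstar"
    and "v1 \<noteq> 0" and "v2 \<noteq> 0" and "v1 \<bullet> v2 = 0"
    and "A *v v1 = l1 *\<^sub>R v1" and "A *v v2 = l2 *\<^sub>R v2"
    and "l1 \<noteq> 0" and "l2 \<noteq> 0"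
    and "x 0 - xstar \<in> span {v1, v2}"
    and "AA_star1_seq (\<lambda>y. A *v y + b) x alpha"
  shows "\<forall>i. 4 dvd i \<longrightarrow> norm (x (i + 4) - xstar) \<le> rate l1 l2 * norm (x i - xstar)"
proof -
  obtain B where B: "B ** (mat 1 - A) = mat 1" using assms(3) unfolding invertible_def by blast
  have inj: "v = 0" if "(mat 1 - A) *v v = 0" for v
  proof -
    have "v = B *v ((mat 1 - A) *v v)" by (simp add: matrix_vector_mul_assoc B)
    then show ?thesis using that by simp
  qed
  have l1ne: "l1 \<noteq> 1"
  proof
    assume "l1 = 1"
    then have "(mat 1 - A) *v v1 = 0" using assms(8) by (simp add: matrix_vector_mult_diff_rdistrib)
    then show False using inj assms(5) by blast
  qed
  have l2ne: "l2 \<noteq> 1"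
  proof
    assume "l2 = 1"
    then have "(mat 1 - A) *v v2 = 0" using assms(9) by (simp add: matrix_vector_mult_diff_rdistrib)
    then show False using inj assms(6) by blast
  qed
  define n1 where "n1 = v1 \<bullet> v1"
  define n2 where "n2 = v2 \<bullet> v2"
  have n1p: "n1 > 0" unfolding n1_def using assms(5) by simp
  have n2p: "n2 > 0" unfolding n2_def using assms(6) by simp
  note stp = aa_step[OF assms(4,5,6,7,8,9) l1ne l2ne assms(13), folded n1_def n2_def]
  have x0: "\<exists>a c. x 0 - xstar = a *\<^sub>R v1 + c *\<^sub>R v2"
  proof -
    obtain a where "x 0 - xstar - a *\<^sub>R v1 \<in> span {v2}"
      using assms(12) unfolding span_breakdown_eq by blast
    then obtain c where "x 0 - xstar - a *\<^sub>R v1 = c *\<^sub>R v2"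
      unfolding span_singleton by auto
    then have "x 0 - xstar = a *\<^sub>R v1 + c *\<^sub>R v2" by (simp add: algebra_simps)
    then show ?thesis by blast
  qed
  have evens: "\<exists>a c. x (2*m) - xstar = a *\<^sub>R v1 + c *\<^sub>R v2" for m
  proof (induction m)
    case 0
    then show ?case using x0 by simp
  next
    case (Suc m)
    then obtain a c where "x (2*m) - xstar = a *\<^sub>R v1 + c *\<^sub>R v2" by blast
    from stp[of "2*m", OF _ this] have "x (2*m+2) - xstar = sa l1 l2 n1 n2 a c *\<^sub>R v1 + sc l1 l2 n1 n2 a c *\<^sub>R v2"
      by simp
    moreover have "2 * Suc m = 2*m+2" by simp
    ultimately show ?case by metis
  qed
  show ?thesis
  proof (intro allI impI)
    fix i :: nat
    assume "4 dvd i"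
    then obtain j where j: "i = 4*j" by blast
    then have ev: "even i" by simp
    have "i = 2*(2*j)" using j by simp
    then obtain a c where ei: "x i - xstar = a *\<^sub>R v1 + c *\<^sub>R v2" using evens by metis
    define a' where "a' = sa l1 l2 n1 n2 a c"
    define c' where "c' = sc l1 l2 n1 n2 a c"
    have e2: "x (i+2) - xstar = a' *\<^sub>R v1 + c' *\<^sub>R v2"
      unfolding a'_def c'_def by (rule stp[OF ev ei])
    have ev2: "even (i+2)" using ev by simp
    have e4: "x (i+2+2) - xstar = sa l1 l2 n1 n2 a' c' *\<^sub>R v1 + sc l1 l2 n1 n2 a' c' *\<^sub>R v2"
      by (rule stp[OF ev2 e2])
    obtain M where M: "sa l1 l2 n1 n2 a' c' = M * a" "sc l1 l2 n1 n2 a' c' = M * c" "\<bar>M\<bar> \<le> rate l1 l2"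
      using two_step[OF n1p n2p l1ne l2ne assms(10,11), of a c] unfolding a'_def c'_def by blast
    have "x (i+4) - xstar = M *\<^sub>R (x i - xstar)"
      using e4 unfolding ei M numeral_Bit0 add.assoc[symmetric] by (simp add: scaleR_add_right)
    then have "norm (x (i+4) - xstar) = \<bar>M\<bar> * norm (x i - xstar)" by simp
    also have "\<dots> \<le> rate l1 l2 * norm (x i - xstar)"
      by (rule mult_right_mono[OF M(3)]) simp
    finally show "norm (x (i + 4) - xstar) \<le> rate l1 l2 * norm (x i - xstar)" .
  qed
qed

end
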